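(* Let $n\ge3$ and let $\mathcal{G}$ be the directed line graph on nodes $\{1,\dots,n\}$ with edges $(i,i+1)$ and $(i+1,i)$ for $i=1,\dots,n-1$ together with self-loops $(i,i)$ at every node, and let $\tau\in\mathbb{Z}$ with $n-1\le\tau\le 2n-3$. If $P^*$ is an optimal solution of $\max_P\min_{i,j}\mathbb{P}(T_{ij}(P)\le\tau)$ over all Markov chain strategies $P$ conforming to $\mathcal{G}$, then $\mathbb{P}(T_{1n}(P^* )\le\tau)=\mathbb{P}(T_{n1}(P^* )\le\tau)$.
   Context: A Markov chain strategy conforming to $\mathcal{G}=(V,\mathcal{E})$ is a row-stochastic nonnegative $P=(p_{ij})$ with $p_{ij}=0$ for $(i,j)\notin\mathcal{E}$. For the Markov chain $(X_k)$ with transition matrix $P$, $T_{ij}=\min\{k\ge1:X_k=j\}$ given $X_0=i$. *)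

theory Defs
  imports Complex_Main
begin

text \<open>Nodes are 1..n. A transition matrix is a function nat => nat => real;
  only its entries on {1..n} x {1..n} matter.\<close>

definition line_graph_edges :: "nat \<Rightarrow> (nat \<times> nat) set" where
  "line_graph_edges n =
     {(i, i) | i. 1 \<le> i \<and> i \<le> n}
   \<union> {(i, i + 1) | i. 1 \<le> i \<and> i \<le> n - 1}
   \<union> {(i + 1, i) | i. 1 \<le> i \<and> i \<le> n - 1}"

definition conforming :: "nat set \<Rightarrow> (nat \<times> nat) set \<Rightarrow> (nat \<Rightarrow> nat \<Rightarrow> real) \<Rightarrow> bool" where
  "conforming V E P \<longleftrightarrow>
     (\<forall>i\<in>V. \<forall>j\<in>V. P i j \<ge> 0) \<and>
     (\<forall>i\<in>V. (\<Sum>j\<in>V. P i j) = 1) \<and>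
     (\<forall>i\<in>V. \<forall>j\<in>V. (i, j) \<notin> E \<longrightarrow> P i j = 0)"

text \<open>hit_prob V P j k i = Prob(T_ij <= k) for the chain started at X_0 = i,
  where T_ij = min {k >= 1. X_k = j}; computed by first-step analysis.\<close>
fun hit_prob :: "nat set \<Rightarrow> (nat \<Rightarrow> nat \<Rightarrow> real) \<Rightarrow> nat \<Rightarrow> nat \<Rightarrow> nat \<Rightarrow> real" where
  "hit_prob V P j 0 i = 0"
| "hit_prob V P j (Suc k) i =
     (\<Sum>l\<in>V. P i l * (if l = j then 1 else hit_prob V P j k l))"

definition min_hit :: "nat set \<Rightarrow> (nat \<Rightarrow> nat \<Rightarrow> real) \<Rightarrow> nat \<Rightarrow> real" where
  "min_hit V P \<tau> = Min {hit_prob V P j \<tau> i | i j. i \<in> V \<and> j \<in> V}"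

end

theory Submission
  imports Defs
begin

declare One_nat_def [simp del]

abbreviation "conf n P \<equiv> conforming {1..n} (line_graph_edges n) P"

lemma edge_iff:
  assumes "i \<in> {1..n}" "j \<in> {1..n}"
  shows "(i,j) \<in> line_graph_edges n \<longleftrightarrow> (j = i \<or> j = i+1 \<or> i = j+1)"
  using assms unfolding line_graph_edges_def by auto

lemma conf_nonneg: "conf n P \<Longrightarrow> i \<in> {1..n} \<Longrightarrow> l \<in> {1..n} \<Longrightarrow> 0 \<le> P i l"
  unfolding conforming_def by auto

lemma conf_sum: "conf n P \<Longrightarrow> i \<in> {1..n} \<Longrightarrow> (\<Sum>l\<in>{1..n}. P i l) = 1"
  unfolding conforming_def by auto

lemma conf_supp: "conf n P \<Longrightarrow> i \<in> {1..n} \<Longrightarrow> l \<in> {1..n} \<Longrightarrow> P i l \<noteq> 0 \<Longrightarrow>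
   l = i \<or> l = i+1 \<or> i = l+1"
  unfolding conforming_def using edge_iff by blast

lemma row_ge:
  assumes "conf n P" "i \<in> {1..n}" "\<And>l. l \<in> {1..n} \<Longrightarrow> P i l \<noteq> 0 \<Longrightarrow> c \<le> x l"
  shows "c \<le> (\<Sum>l\<in>{1..n}. P i l * x l)"
proof -
  have "(\<Sum>l\<in>{1..n}. P i l * c) \<le> (\<Sum>l\<in>{1..n}. P i l * x l)"
  proof (rule sum_mono)
    fix l assume l: "l \<in> {1..n}"
    show "P i l * c \<le> P i l * x l"
    proof (cases "P i l = 0")
      case False
      then show ?thesis using assms l conf_nonneg by (intro mult_left_mono) auto
    qed simp
  qed
  moreover have "(\<Sum>l\<in>{1..n}. P i l * c) = c"
    using conf_sum[OF assms(1,2)] by (simp add: sum_distrib_right[symmetric])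
  ultimately show ?thesis by simp
qed

lemma row_le:
  assumes "conf n P" "i \<in> {1..n}" "\<And>l. l \<in> {1..n} \<Longrightarrow> P i l \<noteq> 0 \<Longrightarrow> x l \<le> c"
  shows "(\<Sum>l\<in>{1..n}. P i l * x l) \<le> c"
proof -
  have "(\<Sum>l\<in>{1..n}. P i l * x l) \<le> (\<Sum>l\<in>{1..n}. P i l * c)"
  proof (rule sum_mono)
    fix l assume l: "l \<in> {1..n}"
    show "P i l * x l \<le> P i l * c"
    proof (cases "P i l = 0")
      case False
      then show ?thesis using assms l conf_nonneg by (intro mult_left_mono) auto
    qed simp
  qed
  moreover have "(\<Sum>l\<in>{1..n}. P i l * c) = c"
    using conf_sum[OF assms(1,2)] by (simp add: sum_distrib_right[symmetric])
  ultimately show ?thesis by simp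
qed

lemma row_mono:
  assumes "conf n P" "i \<in> {1..n}" "\<And>l. l \<in> {1..n} \<Longrightarrow> P i l \<noteq> 0 \<Longrightarrow> x l \<le> y l"
  shows "(\<Sum>l\<in>{1..n}. P i l * x l) \<le> (\<Sum>l\<in>{1..n}. P i l * y l)"
proof (rule sum_mono)
  fix l assume l: "l \<in> {1..n}"
  show "P i l * x l \<le> P i l * y l"
  proof (cases "P i l = 0")
    case False
    then show ?thesis using assms l conf_nonneg by (intro mult_left_mono) auto
  qed simp
qed

lemma hit_nonneg: "conf n P \<Longrightarrow> i \<in> {1..n} \<Longrightarrow> 0 \<le> hit_prob {1..n} P j k i"
proof (induction k arbitrary: i)
  case (Suc k)
  show ?case unfolding hit_prob.simps by (intro row_ge) (use Suc in auto)
qed simp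

lemma hit_le1: "conf n P \<Longrightarrow> i \<in> {1..n} \<Longrightarrow> hit_prob {1..n} P j k i \<le> 1"
proof (induction k arbitrary: i)
  case (Suc k)
  show ?case unfolding hit_prob.simps by (intro row_le) (use Suc in auto)
qed simp

lemma hit_mono_step: "conf n P \<Longrightarrow> i \<in> {1..n} \<Longrightarrow>
   hit_prob {1..n} P j k i \<le> hit_prob {1..n} P j (Suc k) i"
proof (induction k arbitrary: i)
  case 0
  then show ?case using hit_nonneg[OF 0(1,2), of j "Suc 0"] by simp
next
  case (Suc k)
  show ?case using Suc by (simp only: hit_prob.simps, intro row_mono) auto
qed

lemma hit_mono: "conf n P \<Longrightarrow> i \<in> {1..n} \<Longrightarrow> k \<le> k' \<Longrightarrow>
   hit_prob {1..n} P j k i \<le> hit_prob {1..n} P j k' i"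
  using lift_Suc_mono_le[of "\<lambda>k. hit_prob {1..n} P j k i"] hit_mono_step by blast

definition W :: "nat \<Rightarrow> (nat \<Rightarrow> nat \<Rightarrow> real) \<Rightarrow> nat \<Rightarrow> nat \<Rightarrow> real" where
  "W n P k x = (if x = n then 1 else hit_prob {1..n} P n k x)"

lemma hit_W: "hit_prob {1..n} P n (Suc k) i = (\<Sum>l\<in>{1..n}. P i l * W n P k l)"
  by (simp only: hit_prob.simps W_def)

lemma W_le1: "conf n P \<Longrightarrow> x \<in> {1..n} \<Longrightarrow> W n P k x \<le> 1"
  using hit_le1 by (simp add: W_def)

lemma W_nonneg: "conf n P \<Longrightarrow> x \<in> {1..n} \<Longrightarrow> 0 \<le> W n P k x"
  using hit_nonneg by (simp add: W_def)

lemma W_mono_step: "conf n P \<Longrightarrow> x \<in> {1..n} \<Longrightarrow> W n P k x \<le> W n P (Suc k) x"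
  using hit_mono_step by (simp add: W_def)

lemma skip: "conf n P \<Longrightarrow> 1 \<le> l \<Longrightarrow> l < n \<Longrightarrow>
   hit_prob {1..n} P n (Suc k) l \<le> W n P k (l+1)"
proof (induction k arbitrary: l)
  case 0
  show ?case unfolding hit_W
  proof (rule row_le)
    fix x assume x: "x \<in> {1..n}" "P l x \<noteq> 0"
    then have "x = l \<or> x = l+1 \<or> l = x+1" using conf_supp 0 by auto
    then show "W n P 0 x \<le> W n P 0 (l + 1)"
      using 0 W_nonneg[of n P "l+1" 0] by (auto simp: W_def)
  qed (use 0 in auto)
next
  case (Suc k)
  show ?case unfolding hit_W
  proof (rule row_le)
    fix x assume x: "x \<in> {1..n}" "P l x \<noteq> 0"
    then have "x = l \<or> x = l+1 \<or> l = x+1" using conf_supp Suc by auto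
    moreover have "W n P (Suc k) l \<le> W n P (Suc k) (l + 1)"
    proof -
      have "W n P (Suc k) l = hit_prob {1..n} P n (Suc k) l" using Suc by (simp add: W_def)
      also have "\<dots> \<le> W n P k (l+1)" using Suc by auto
      also have "\<dots> \<le> W n P (Suc k) (l+1)" using Suc W_mono_step by auto
      finally show ?thesis .
    qed
    moreover have "l = x+1 \<Longrightarrow> W n P (Suc k) x \<le> W n P (Suc k) l"
    proof -
      assume lx: "l = x+1"
      have "W n P (Suc k) x = hit_prob {1..n} P n (Suc k) x" using Suc lx by (simp add: W_def)
      also have "\<dots> \<le> W n P k (x+1)" using Suc x lx by auto
      also have "\<dots> \<le> W n P (Suc k) (x+1)" using Suc W_mono_step lx by auto
      finally show ?thesis using lx by simp
    qed
    ultimately show "W n P (Suc k) x \<le> W n P (Suc k) (l + 1)" by force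
  qed (use Suc in auto)
qed

lemma mono_x1: "conf n P \<Longrightarrow> 1 \<le> l \<Longrightarrow> l < n \<Longrightarrow> W n P k l \<le> W n P k (Suc l)"
proof (cases k)
  case 0
  assume "conf n P" "1 \<le> l" "l < n"
  then show ?thesis using 0 W_nonneg[of n P "Suc l" 0] by (simp add: W_def)
next
  case (Suc k')
  assume a: "conf n P" "1 \<le> l" "l < n"
  have "W n P k l = hit_prob {1..n} P n (Suc k') l" using a Suc by (simp add: W_def)
  also have "\<dots> \<le> W n P k' (l+1)" using a skip by auto
  also have "\<dots> \<le> W n P k (l+1)" using a W_mono_step Suc by auto
  finally show ?thesis by (simp add: Suc_eq_plus1)
qed

lemma mono_x: assumes "conf n P" "1 \<le> l" "l \<le> l'" "l' \<le> n" shows "W n P k l \<le> W n P k l'"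
  using assms(3,4)
proof (induction l' rule: dec_induct)
  case (step m)
  then show ?case using mono_x1[of n P m k] assms by auto
qed simp

lemma dist0: "conf n P \<Longrightarrow> i \<in> {1..n} \<Longrightarrow> m + i < n \<Longrightarrow> hit_prob {1..n} P n m i = 0"
proof (induction m arbitrary: i)
  case (Suc m)
  show ?case unfolding hit_W
  proof (rule sum.neutral, intro ballI)
    fix l assume l: "l \<in> {1..n}"
    show "P i l * W n P m l = 0"
    proof (cases "P i l = 0")
      case False
      then have "l = i \<or> l = i+1 \<or> i = l+1" using conf_supp Suc l by auto
      then have "W n P m l = 0" using Suc l by (auto simp: W_def)
      then show ?thesis by simp
    qed simp
  qed
qed simp

lemma lemC: "conf n P \<Longrightarrow> 1 \<le> i \<Longrightarrow> i < j \<Longrightarrow> j \<le> n \<Longrightarrow>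
  hit_prob {1..n} P n (k + (n - j)) i \<le> hit_prob {1..n} P j k i"
proof (induction k arbitrary: i)
  case 0
  then show ?case using dist0[of n P i "n-j"] by simp
next
  case (Suc k)
  have "hit_prob {1..n} P n (Suc k + (n - j)) i = (\<Sum>l\<in>{1..n}. P i l * W n P (k + (n-j)) l)"
    using hit_W by simp
  also have "\<dots> \<le> (\<Sum>l\<in>{1..n}. P i l * (if l = j then 1 else hit_prob {1..n} P j k l))"
  proof (rule row_mono)
    fix l assume l: "l \<in> {1..n}" "P i l \<noteq> 0"
    then have "l = i \<or> l = i+1 \<or> i = l+1" using conf_supp Suc by auto
    then have "l \<le> j" using Suc by auto
    show "W n P (k + (n - j)) l \<le> (if l = j then 1 else hit_prob {1..n} P j k l)"
    proof (cases "l = j")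
      case True then show ?thesis using W_le1 Suc l by auto
    next
      case False
      then have "l < j" "l \<noteq> n" using \<open>l \<le> j\<close> Suc by auto
      then show ?thesis using Suc l False by (auto simp: W_def)
    qed
  qed (use Suc in auto)
  also have "\<dots> = hit_prob {1..n} P j (Suc k) i" by (simp only: hit_prob.simps)
  finally show ?case .
qed

lemma lemA: "conf n P \<Longrightarrow> i \<in> {1..n} \<Longrightarrow> j \<in> {1..n} \<Longrightarrow> i < j \<Longrightarrow>
  hit_prob {1..n} P n t 1 \<le> hit_prob {1..n} P j t i"
proof -
  assume a: "conf n P" "i \<in> {1..n}" "j \<in> {1..n}" "i < j"
  have "hit_prob {1..n} P n t 1 = W n P t 1" using a by (simp add: W_def)
  also have "\<dots> \<le> W n P t i" using a by (intro mono_x) auto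
  also have "\<dots> = hit_prob {1..n} P n t i" using a by (simp add: W_def)
  also have "\<dots> \<le> hit_prob {1..n} P n (t + (n - j)) i" using a by (intro hit_mono) auto
  also have "\<dots> \<le> hit_prob {1..n} P j t i" using a by (intro lemC) auto
  finally show ?thesis .
qed

lemma lemB: "conf n P \<Longrightarrow> 3 \<le> n \<Longrightarrow> 2 \<le> i \<Longrightarrow> i \<le> n \<Longrightarrow>
  hit_prob {1..n} P n (Suc t) 1 \<le> hit_prob {1..n} P i t (i - 1)"
proof -
  assume a: "conf n P" "3 \<le> n" "2 \<le> i" "i \<le> n"
  show ?thesis
  proof (cases "i < n")
    case True
    have "hit_prob {1..n} P n (Suc t) 1 = W n P (Suc t) 1" using a by (simp add: W_def)
    also have "\<dots> \<le> W n P (Suc t) (i-1)" using a by (intro mono_x) auto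
    also have "\<dots> = hit_prob {1..n} P n (Suc t) (i-1)" using a True by (simp add: W_def)
    also have "\<dots> \<le> hit_prob {1..n} P n (t + (n - i)) (i-1)" using a True by (intro hit_mono) auto
    also have "\<dots> \<le> hit_prob {1..n} P i t (i-1)" using a True by (intro lemC) auto
    finally show ?thesis .
  next
    case False
    then have i: "i = n" using a by auto
    have "hit_prob {1..n} P n (Suc t) 1 \<le> W n P t (1+1)" using a by (intro skip) auto
    also have "\<dots> \<le> W n P t (n-1)" using a by (intro mono_x) auto
    also have "\<dots> = hit_prob {1..n} P n t (n-1)" using a by (auto simp: W_def)
    finally have "hit_prob {1..n} P n (Suc t) 1 \<le> hit_prob {1..n} P n t (n-1)" .
    then show ?thesis by (simp only: i)
  qed
qed

definition rf :: "nat \<Rightarrow> (nat \<Rightarrow> nat \<Rightarrow> real) \<Rightarrow> nat \<Rightarrow> nat \<Rightarrow> real" where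
  "rf n P i j = P (n + 1 - i) (n + 1 - j)"

lemma flip_sum: "(\<Sum>l\<in>{1..n}. h l) = (\<Sum>m\<in>{1..n}. h (n + 1 - m))" for h :: "nat \<Rightarrow> real"
  by (rule sum.reindex_bij_witness[of _ "\<lambda>m. n+1-m" "\<lambda>m. n+1-m"]) auto

lemma conf_rf: "conf n P \<Longrightarrow> conf n (rf n P)"
proof -
  assume a: "conf n P"
  have e: "\<And>i j. i \<in> {1..n} \<Longrightarrow> j \<in> {1..n} \<Longrightarrow> (i,j) \<notin> line_graph_edges n \<Longrightarrow>
      (n+1-i, n+1-j) \<notin> line_graph_edges n"
    by (subst (asm) edge_iff, assumption+, subst edge_iff) auto
  show ?thesis unfolding conforming_def
  proof (intro conjI ballI impI)
    fix i j assume "i \<in> {1..n}" "j \<in> {1..n}"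
    then have "n+1-i \<in> {1..n}" "n+1-j \<in> {1..n}" by auto
    then show "0 \<le> rf n P i j" using a conf_nonneg[of n P "n+1-i" "n+1-j"] by (simp add: rf_def)
  next
    fix i assume i: "i \<in> {1..n}"
    have "(\<Sum>j\<in>{1..n}. rf n P i j) = (\<Sum>m\<in>{1..n}. rf n P i (n+1-m))" by (rule flip_sum)
    also have "\<dots> = (\<Sum>m\<in>{1..n}. P (n+1-i) m)" by (intro sum.cong) (auto simp: rf_def)
    also have "\<dots> = 1" using a i by (intro conf_sum) auto
    finally show "(\<Sum>j\<in>{1..n}. rf n P i j) = 1" .
  next
    fix i j assume ij: "i \<in> {1..n}" "j \<in> {1..n}" "(i, j) \<notin> line_graph_edges n"
    then have "(n+1-i, n+1-j) \<notin> line_graph_edges n" by (intro e)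
    moreover have "n+1-i \<in> {1..n}" "n+1-j \<in> {1..n}" using ij by auto
    ultimately show "rf n P i j = 0" using a unfolding conforming_def rf_def by blast
  qed
qed

lemma hit_rf: "i \<in> {1..n} \<Longrightarrow> j \<in> {1..n} \<Longrightarrow>
  hit_prob {1..n} (rf n P) (n+1-j) k (n+1-i) = hit_prob {1..n} P j k i"
proof (induction k arbitrary: i)
  case (Suc k)
  have "hit_prob {1..n} (rf n P) (n+1-j) (Suc k) (n+1-i) =
     (\<Sum>l\<in>{1..n}. rf n P (n+1-i) l * (if l = n+1-j then 1 else hit_prob {1..n} (rf n P) (n+1-j) k l))"
    by simp
  also have "\<dots> = (\<Sum>m\<in>{1..n}. rf n P (n+1-i) (n+1-m) * (if n+1-m = n+1-j then 1 else
        hit_prob {1..n} (rf n P) (n+1-j) k (n+1-m)))" by (rule flip_sum)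
  also have "\<dots> = (\<Sum>m\<in>{1..n}. P i m * (if m = j then 1 else hit_prob {1..n} P j k m))"
  proof (intro sum.cong refl)
    fix m assume m: "m \<in> {1..n}"
    have e1: "(n+1-m = n+1-j) = (m = j)" using Suc m by auto
    have e2: "rf n P (n+1-i) (n+1-m) = P i m" using Suc m by (simp add: rf_def)
    have e3: "hit_prob {1..n} (rf n P) (n+1-j) k (n+1-m) = hit_prob {1..n} P j k m"
      using Suc.IH[OF m Suc.prems(2)] .
    show "rf n P (n+1-i) (n+1-m) * (if n+1-m = n+1-j then 1 else
        hit_prob {1..n} (rf n P) (n+1-j) k (n+1-m)) = P i m * (if m = j then 1 else hit_prob {1..n} P j k m)"
      by (simp only: e1 e2 e3)
  qed
  also have "\<dots> = hit_prob {1..n} P j (Suc k) i" by (simp only: hit_prob.simps)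
  finally show ?case .
qed simp

lemma hit_rf': "i \<in> {1..n} \<Longrightarrow> j \<in> {1..n} \<Longrightarrow> i' = n+1-i \<Longrightarrow> j' = n+1-j \<Longrightarrow>
  hit_prob {1..n} (rf n P) j' k i' = hit_prob {1..n} P j k i"
  using hit_rf by blast

lemma LB:
  assumes "conf n P" "3 \<le> n" "i \<in> {1..n}" "j \<in> {1..n}"
  shows "min (hit_prob {1..n} P n (Suc t) 1) (hit_prob {1..n} P 1 (Suc t) n) \<le> hit_prob {1..n} P j (Suc t) i"
proof -
  have R: "conf n (rf n P)" using conf_rf assms by auto
  have gR: "hit_prob {1..n} (rf n P) n k 1 = hit_prob {1..n} P 1 k n" for k
    using assms by (intro hit_rf') auto
  consider "i < j" | "j < i" | "i = j" by arith
  then show ?thesis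
  proof cases
    case 1 then show ?thesis using lemA[OF assms(1,3,4) 1, of "Suc t"] by (simp add: min.coboundedI1)
  next
    case 2
    have "hit_prob {1..n} (rf n P) n (Suc t) 1 \<le> hit_prob {1..n} (rf n P) (n+1-j) (Suc t) (n+1-i)"
      using 2 assms R by (intro lemA) auto
    then show ?thesis using gR hit_rf assms by (metis min.coboundedI2)
  next
    case 3
    have "min (hit_prob {1..n} P n (Suc t) 1) (hit_prob {1..n} P 1 (Suc t) n) \<le>
      (\<Sum>l\<in>{1..n}. P i l * (if l = i then 1 else hit_prob {1..n} P i t l))"
    proof (rule row_ge[OF assms(1,3)])
      fix l assume l: "l \<in> {1..n}" "P i l \<noteq> 0"
      let ?G = "min (hit_prob {1..n} P n (Suc t) 1) (hit_prob {1..n} P 1 (Suc t) n)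
           \<le> (if l = i then 1 else hit_prob {1..n} P i t l)"
      have h1: "hit_prob {1..n} P n (Suc t) 1 \<le> 1" by (rule hit_le1[OF assms(1)]) (use assms in auto)
      have "l = i \<or> l = i+1 \<or> i = l+1" using conf_supp assms l by auto
      moreover have "l = i \<Longrightarrow> ?G" using h1 by (simp del: hit_prob.simps add: min.coboundedI1)
      moreover have "i = l + 1 \<Longrightarrow> ?G" using lemB[OF assms(1,2), of i t] assms l
        by (auto intro: min.coboundedI1)
      moreover have "l = i + 1 \<Longrightarrow> ?G"
      proof -
        assume li: "l = i + 1"
        have "hit_prob {1..n} (rf n P) n (Suc t) 1 \<le> hit_prob {1..n} (rf n P) (n+1-i) t (n+1-i - 1)"
          using R assms l li by (intro lemB) auto
        also have "\<dots> = hit_prob {1..n} P i t l" using assms l li by (intro hit_rf') auto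
        finally have "hit_prob {1..n} P 1 (Suc t) n \<le> hit_prob {1..n} P i t l" unfolding gR .
        then show ?G using li by (simp del: hit_prob.simps add: min.coboundedI2)
      qed
      ultimately show "min (hit_prob {1..n} P n (Suc t) 1) (hit_prob {1..n} P 1 (Suc t) n)
           \<le> (if l = i then 1 else hit_prob {1..n} P i t l)" by blast
    qed
    then show ?thesis using 3 by (simp only: hit_prob.simps)
  qed
qed

lemma min_hit_ge:
  assumes "conf n P" "3 \<le> n" "1 \<le> \<tau>"
  shows "min (hit_prob {1..n} P n \<tau> 1) (hit_prob {1..n} P 1 \<tau> n) \<le> min_hit {1..n} P \<tau>"
proof -
  obtain t where t: "\<tau> = Suc t" using assms by (cases \<tau>) auto
  have fin: "finite {hit_prob {1..n} P j \<tau> i | i j. i \<in> {1..n} \<and> j \<in> {1..n}}"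
    by (rule finite_image_set2) auto
  have one: "(1::nat) \<in> {1..n}" using assms by simp
  have ne: "{hit_prob {1..n} P j \<tau> i | i j. i \<in> {1..n} \<and> j \<in> {1..n}} \<noteq> {}" using one by blast
  show ?thesis unfolding min_hit_def using LB[OF assms(1,2)] t
    by (subst Min_ge_iff[OF fin ne]) auto
qed

lemma min_hit_le:
  assumes "i \<in> {1..n}" "j \<in> {1..n}"
  shows "min_hit {1..n} P \<tau> \<le> hit_prob {1..n} P j \<tau> i"
proof -
  have fin: "finite {hit_prob {1..n} P j \<tau> i | i j. i \<in> {1..n} \<and> j \<in> {1..n}}"
    by (rule finite_image_set2) auto
  show ?thesis unfolding min_hit_def using assms by (intro Min_le[OF fin]) auto
qed

definition Qr :: "nat \<Rightarrow> nat \<Rightarrow> nat \<Rightarrow> real" where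
  "Qr n i j = (if j = min (i+1) n then 1 else 0)"

definition Pe :: "nat \<Rightarrow> (nat \<Rightarrow> nat \<Rightarrow> real) \<Rightarrow> real \<Rightarrow> nat \<Rightarrow> nat \<Rightarrow> real" where
  "Pe n P e i j = (1 - e) * P i j + e * Qr n i j"

lemma Qsum: "i \<in> {1..n} \<Longrightarrow> (\<Sum>l\<in>{1..n}. Qr n i l * x l) = x (min (i+1) n)"
proof -
  assume i: "i \<in> {1..n}"
  have "(\<Sum>l\<in>{1..n}. Qr n i l * x l) = (\<Sum>l\<in>{1..n}. if l = min (i+1) n then x l else 0)"
    by (intro sum.cong) (auto simp: Qr_def)
  also have "\<dots> = x (min (i+1) n)" using i by (subst sum.delta) auto
  finally show ?thesis .
qed

lemma Pe0: "Pe n P 0 = P"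
  by (simp add: Pe_def fun_eq_iff)

lemma conf_Pe:
  assumes "conf n P" "0 \<le> e" "e \<le> 1"
  shows "conf n (Pe n P e)"
  unfolding conforming_def
proof (intro conjI ballI impI)
  fix i j assume ij: "i \<in> {1..n}" "j \<in> {1..n}"
  have "0 \<le> P i j" using assms ij conf_nonneg by auto
  moreover have "0 \<le> Qr n i j" by (simp add: Qr_def)
  ultimately show "0 \<le> Pe n P e i j" using assms unfolding Pe_def by simp
next
  fix i assume i: "i \<in> {1..n}"
  have "(\<Sum>j\<in>{1..n}. Pe n P e i j) = (1-e) * (\<Sum>j\<in>{1..n}. P i j) + e * (\<Sum>j\<in>{1..n}. Qr n i j * 1)"
    unfolding Pe_def by (simp add: sum.distrib sum_distrib_left)
  also have "\<dots> = 1" using Qsum[OF i, of "\<lambda>_. 1"] conf_sum[OF assms(1) i] by simp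
  finally show "(\<Sum>j\<in>{1..n}. Pe n P e i j) = 1" .
next
  fix i j assume ij: "i \<in> {1..n}" "j \<in> {1..n}" "(i, j) \<notin> line_graph_edges n"
  then have "P i j = 0" using assms unfolding conforming_def by blast
  moreover have "Qr n i j = 0"
  proof (rule ccontr)
    assume "Qr n i j \<noteq> 0"
    then have "j = min (i+1) n" by (simp add: Qr_def split: if_splits)
    then have "j = i \<or> j = i + 1" using ij by auto
    then show False using ij edge_iff by blast
  qed
  ultimately show "Pe n P e i j = 0" by (simp add: Pe_def)
qed

lemma Pe_sum: "(\<Sum>l\<in>A. Pe n P e i l * w l) =
   (1-e) * (\<Sum>l\<in>A. P i l * w l) + e * (\<Sum>l\<in>A. Qr n i l * w l)"
proof -
  have "(\<Sum>l\<in>A. Pe n P e i l * w l) = (\<Sum>l\<in>A. (1-e) * (P i l * w l) + e * (Qr n i l * w l))"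
    unfolding Pe_def by (intro sum.cong) (auto simp: algebra_simps)
  also have "\<dots> = (1-e) * (\<Sum>l\<in>A. P i l * w l) + e * (\<Sum>l\<in>A. Qr n i l * w l)"
    by (simp add: sum.distrib sum_distrib_left)
  finally show ?thesis .
qed

lemma cPe: "isCont (\<lambda>e. Pe n P e i l) e0"
  unfolding Pe_def by (intro continuous_intros)

lemma DEC:
  assumes "i \<in> {1..n}"
  shows "hit_prob {1..n} (Pe n P e) n (Suc k) i =
    (1-e) * (\<Sum>l\<in>{1..n}. P i l * W n (Pe n P e) k l) + e * W n (Pe n P e) k (min (i+1) n)"
proof -
  have "hit_prob {1..n} (Pe n P e) n (Suc k) i = (\<Sum>l\<in>{1..n}. Pe n P e i l * W n (Pe n P e) k l)"
    by (rule hit_W)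
  also have "\<dots> = (1-e) * (\<Sum>l\<in>{1..n}. P i l * W n (Pe n P e) k l)
     + e * (\<Sum>l\<in>{1..n}. Qr n i l * W n (Pe n P e) k l)"
    by (rule Pe_sum)
  also have "\<dots> = (1-e) * (\<Sum>l\<in>{1..n}. P i l * W n (Pe n P e) k l) + e * W n (Pe n P e) k (min (i+1) n)"
    using Qsum[OF assms] by simp
  finally show ?thesis .
qed

lemma Mono:
  assumes "conf n P" "0 \<le> e" "e \<le> 1"
  shows "i \<in> {1..n} \<Longrightarrow> hit_prob {1..n} P n k i \<le> hit_prob {1..n} (Pe n P e) n k i"
proof (induction k arbitrary: i)
  case 0
  then show ?case by simp
next
  case (Suc k)
  have WW: "W n P k l \<le> W n (Pe n P e) k l" if "l \<in> {1..n}" for l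
    using Suc.IH[OF that] by (simp add: W_def)
  have mi: "min (i+1) n \<in> {1..n}" using Suc by auto
  have A: "hit_prob {1..n} P n (Suc k) i \<le> W n P k (min (i+1) n)"
  proof (cases "i < n")
    case True then show ?thesis using skip[OF assms(1)] Suc by auto
  next
    case False then have "min (i+1) n = n" by auto
    then have "W n P k (min (i+1) n) = 1" by (simp add: W_def)
    then show ?thesis using hit_le1[OF assms(1) Suc.prems, of n "Suc k"] by linarith
  qed
  define h where "h = hit_prob {1..n} P n (Suc k) i"
  define S1 where "S1 = (\<Sum>l\<in>{1..n}. P i l * W n (Pe n P e) k l)"
  have "h = (\<Sum>l\<in>{1..n}. P i l * W n P k l)" unfolding h_def by (rule hit_W)
  also have "\<dots> \<le> S1" unfolding S1_def using WW by (intro row_mono[OF assms(1) Suc.prems])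
  finally have h1: "h \<le> S1" .
  have h2: "h \<le> W n (Pe n P e) k (min (i+1) n)" using A WW[OF mi] unfolding h_def by linarith
  have "(1-e) * h \<le> (1-e) * S1" using h1 assms by (intro mult_left_mono) auto
  moreover have "e * h \<le> e * W n (Pe n P e) k (min (i+1) n)" using h2 assms by (intro mult_left_mono) auto
  ultimately have "h \<le> (1-e) * S1 + e * W n (Pe n P e) k (min (i+1) n)" by (simp add: algebra_simps)
  then show ?case unfolding DEC[OF Suc.prems] h_def S1_def .
qed

lemma Strict:
  assumes "conf n P" "0 < e" "e \<le> 1"
  shows "1 \<le> i \<Longrightarrow> i < n \<Longrightarrow> n - i \<le> k \<Longrightarrow> hit_prob {1..n} P n k i < 1 \<Longrightarrow>
     hit_prob {1..n} P n k i < hit_prob {1..n} (Pe n P e) n k i"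
proof (induction k arbitrary: i)
  case 0
  then show ?case by simp
next
  case (Suc k)
  have iV: "i \<in> {1..n}" using Suc by auto
  have WW: "W n P k l \<le> W n (Pe n P e) k l" if "l \<in> {1..n}" for l
    using Mono[OF assms(1) _ assms(3) that, of k] assms by (simp add: W_def)
  have mi: "min (i+1) n = i + 1" using Suc by auto
  define h where "h = hit_prob {1..n} P n (Suc k) i"
  define S1 where "S1 = (\<Sum>l\<in>{1..n}. P i l * W n (Pe n P e) k l)"
  have "h = (\<Sum>l\<in>{1..n}. P i l * W n P k l)" unfolding h_def by (rule hit_W)
  also have "\<dots> \<le> S1" unfolding S1_def using WW by (intro row_mono[OF assms(1) iV])
  finally have h1: "h \<le> S1" .
  have hlt: "h < 1" using Suc h_def by simp
  have h2: "h < W n (Pe n P e) k (i+1)"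
  proof (cases "i + 1 = n")
    case True then show ?thesis using hlt by (simp add: W_def)
  next
    case False
    then have lt: "i + 1 < n" using Suc by auto
    have sk: "h \<le> hit_prob {1..n} P n k (i+1)"
      using skip[OF assms(1), of i k] Suc lt unfolding h_def by (simp add: W_def)
    have eq: "W n (Pe n P e) k (i+1) = hit_prob {1..n} (Pe n P e) n k (i+1)" using lt by (simp add: W_def)
    show ?thesis
    proof (cases "hit_prob {1..n} P n k (i+1) < 1")
      case True
      have "hit_prob {1..n} P n k (i+1) < hit_prob {1..n} (Pe n P e) n k (i+1)"
        using Suc.IH[of "i+1"] True lt Suc.prems by auto
      then show ?thesis using sk eq by linarith
    next
      case False
      have "hit_prob {1..n} P n k (i+1) \<le> hit_prob {1..n} (Pe n P e) n k (i+1)"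
        using Mono[OF assms(1) _ assms(3), of "i+1" k] assms lt by auto
      then show ?thesis using False hlt eq by linarith
    qed
  qed
  have "(1-e) * h \<le> (1-e) * S1" using h1 assms by (intro mult_left_mono) auto
  moreover have "e * h < e * W n (Pe n P e) k (i+1)" using h2 assms by (intro mult_strict_left_mono) auto
  ultimately have "h < (1-e) * S1 + e * W n (Pe n P e) k (i+1)" by (simp add: algebra_simps)
  then show ?case unfolding DEC[OF iV] h_def S1_def mi .
qed

lemma cont: "isCont (\<lambda>e. hit_prob {1..n} (Pe n P e) j k i) e0"
proof (induction k arbitrary: i)
  case 0
  then show ?case by simp
next
  case (Suc k)
  have c: "isCont (\<lambda>e. if l = j then 1 else hit_prob {1..n} (Pe n P e) j k l) e0" for l
    using Suc by (cases "l = j") auto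
  show ?case unfolding hit_prob.simps
    by (intro continuous_intros c cPe)
qed

lemma core:
  assumes "conf n P" "3 \<le> n" "n - 1 \<le> \<tau>"
    and lt: "hit_prob {1..n} P n \<tau> 1 < hit_prob {1..n} P 1 \<tau> n"
  shows "\<exists>Q. conf n Q \<and> hit_prob {1..n} P n \<tau> 1 < min_hit {1..n} Q \<tau>"
proof -
  define f where "f = hit_prob {1..n} P n \<tau> 1"
  define g where "g = hit_prob {1..n} P 1 \<tau> n"
  have "isCont (\<lambda>e. hit_prob {1..n} (Pe n P e) 1 \<tau> n) 0" by (rule cont)
  then have "\<forall>r>0. \<exists>s>0. \<forall>x. x \<noteq> 0 \<and> norm (x - 0) < s \<longrightarrow>
     norm (hit_prob {1..n} (Pe n P x) 1 \<tau> n - hit_prob {1..n} (Pe n P 0) 1 \<tau> n) < r"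
    unfolding isCont_def LIM_eq .
  moreover have "g - f > 0" using lt f_def g_def by simp
  ultimately obtain s where s: "s > 0" and
    hs: "\<And>x. x \<noteq> 0 \<and> norm (x - 0) < s \<Longrightarrow>
     norm (hit_prob {1..n} (Pe n P x) 1 \<tau> n - hit_prob {1..n} (Pe n P 0) 1 \<tau> n) < g - f"
    by blast
  define e where "e = min (s/2) 1"
  have e: "0 < e" "e \<le> 1" "e \<noteq> 0" "norm (e - 0) < s" using s unfolding e_def by auto
  have "\<bar>hit_prob {1..n} (Pe n P e) 1 \<tau> n - g\<bar> < g - f" using hs[of e] e unfolding Pe0 g_def by auto
  then have gE: "f < hit_prob {1..n} (Pe n P e) 1 \<tau> n" by linarith
  have g1: "g \<le> 1" unfolding g_def using hit_le1[OF assms(1)] assms by auto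
  have fE: "f < hit_prob {1..n} (Pe n P e) n \<tau> 1"
    unfolding f_def using Strict[OF assms(1) e(1,2), of 1 \<tau>] assms lt g1 g_def by auto
  have cQ: "conf n (Pe n P e)" using conf_Pe[OF assms(1)] e by auto
  have "min (hit_prob {1..n} (Pe n P e) n \<tau> 1) (hit_prob {1..n} (Pe n P e) 1 \<tau> n) \<le> min_hit {1..n} (Pe n P e) \<tau>"
    using min_hit_ge[OF cQ assms(2)] assms by auto
  then show ?thesis using cQ fE gE f_def by (intro exI[of _ "Pe n P e"]) auto
qed

theorem lemma6:
  fixes n \<tau> :: nat and Pstar :: "nat \<Rightarrow> nat \<Rightarrow> real"
  assumes "n \<ge> 3"
    and "n - 1 \<le> \<tau>" and "\<tau> \<le> 2 * n - 3"
    and "conforming {1..n} (line_graph_edges n) Pstar"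
    and "\<forall>P. conforming {1..n} (line_graph_edges n) P \<longrightarrow>
               min_hit {1..n} P \<tau> \<le> min_hit {1..n} Pstar \<tau>"
  shows "hit_prob {1..n} Pstar n \<tau> 1 = hit_prob {1..n} Pstar 1 \<tau> n"
proof (rule ccontr)
  assume ne: "hit_prob {1..n} Pstar n \<tau> 1 \<noteq> hit_prob {1..n} Pstar 1 \<tau> n"
  have V1: "(1::nat) \<in> {1..n}" and Vn: "n \<in> {1..n}" using assms by auto
  consider "hit_prob {1..n} Pstar n \<tau> 1 < hit_prob {1..n} Pstar 1 \<tau> n"
    | "hit_prob {1..n} Pstar 1 \<tau> n < hit_prob {1..n} Pstar n \<tau> 1" using ne by linarith
  then show False
  proof cases
    case 1
    obtain Q where Q: "conf n Q" "hit_prob {1..n} Pstar n \<tau> 1 < min_hit {1..n} Q \<tau>"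
      using core[OF assms(4,1,2) 1] by blast
    have "min_hit {1..n} Pstar \<tau> \<le> hit_prob {1..n} Pstar n \<tau> 1" using min_hit_le V1 Vn by blast
    then show False using Q assms(5) by force
  next
    case 2
    have R: "conf n (rf n Pstar)" using conf_rf assms by auto
    have a: "hit_prob {1..n} (rf n Pstar) n \<tau> 1 = hit_prob {1..n} Pstar 1 \<tau> n"
      using V1 Vn by (intro hit_rf') auto
    have b: "hit_prob {1..n} (rf n Pstar) 1 \<tau> n = hit_prob {1..n} Pstar n \<tau> 1"
      using V1 Vn by (intro hit_rf') auto
    obtain Q where Q: "conf n Q" "hit_prob {1..n} (rf n Pstar) n \<tau> 1 < min_hit {1..n} Q \<tau>"
      using core[OF R assms(1,2)] 2 a b by auto
    have "min_hit {1..n} Pstar \<tau> \<le> hit_prob {1..n} Pstar 1 \<tau> n" using min_hit_le V1 Vn by blast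
    then show False using Q a assms(5) by force
  qed
qed

end
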